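(* Let $A_1,\dots,A_{20}$ be the vertices of a regular dodecahedron in $\mathbb R^3$ and let $\Gamma$ be its circumscribed sphere. There are at most eight real numbers $\lambda$ for which the function $M\mapsto\sum_{i=1}^{20}|MA_i|^{\lambda}$ is constant on $\Gamma\setminus\{A_1,\dots,A_{20}\}$.
   Context: $|MA|$ denotes Euclidean distance. *)

theory Defs
  imports "HOL-Analysis.Analysis"
begin

definition golden :: real where
  "golden = (1 + sqrt 5) / 2"

definition std_dodecahedron_vertices :: "(real^3) set" where
  "std_dodecahedron_vertices =
     {vector [a, b, c] | a b c. a \<in> {-1, 1} \<and> b \<in> {-1, 1} \<and> c \<in> {-1, 1}}
   \<union> {vector [0, s / golden, t * golden] | s t. s \<in> {-1, 1} \<and> t \<in> {-1, 1}}
   \<union> {vector [s / golden, t * golden, 0] | s t. s \<in> {-1, 1} \<and> t \<in> {-1, 1}}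
   \<union> {vector [t * golden, 0, s / golden] | s t. s \<in> {-1, 1} \<and> t \<in> {-1, 1}}"

definition regular_dodecahedron_vertices :: "(real^3) set \<Rightarrow> bool" where
  "regular_dodecahedron_vertices V \<longleftrightarrow>
     (\<exists>c r f. r > 0 \<and> orthogonal_transformation f \<and>
        V = (\<lambda>v. c + r *\<^sub>R f v) ` std_dodecahedron_vertices)"

end

theory Submission
  imports Defs
begin


lemma rolle_count:
  fixes f f' :: "real \<Rightarrow> real"
  assumes deriv: "\<And>x. (f has_real_derivative f' x) (at x)"
    and fin: "finite {x. f' x = 0}"
  shows "finite {x. f x = 0} \<and> card {x. f x = 0} \<le> card {x. f' x = 0} + 1"
proof -
  define Z where "Z = {x. f x = 0}"
  define Z' where "Z' = {x. f' x = 0}"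
  have cont: "continuous_on S f" for S
    using deriv by (meson DERIV_isCont continuous_at_imp_continuous_on)
  have claim: "card T \<le> card (Z' \<inter> {..<Max T}) + 1"
    if "finite T" "T \<subseteq> Z" "T \<noteq> {}" for T
    using that
  proof (induction "card T" arbitrary: T)
    case 0
    then show ?case by simp
  next
    case (Suc n T)
    define t where "t = Max T"
    define T0 where "T0 = T - {t}"
    have tT: "t \<in> T" using Suc.prems t_def by simp
    show ?case
    proof (cases "T0 = {}")
      case True
      then have "T = {t}" using tT T0_def by blast
      then show ?thesis by simp
    next
      case False
      have cT0: "card T0 = n" using Suc.hyps(2) tT T0_def Suc.prems by simp
      have IH: "card T0 \<le> card (Z' \<inter> {..<Max T0}) + 1"
        using Suc.hyps(1)[of T0] cT0 False Suc.prems T0_def by auto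
      define s where "s = Max T0"
      have "finite T0" using Suc.prems T0_def by simp
      then have sT0: "s \<in> T0" using False s_def by simp
      have "s \<le> t" using sT0 T0_def t_def Suc.prems by simp
      moreover have "s \<noteq> t" using sT0 T0_def by simp
      ultimately have st: "s < t" by simp
      have "f s = 0" "f t = 0" using sT0 tT T0_def Suc.prems Z_def by auto
      then obtain z where z: "s < z" "z < t" "DERIV f z :> 0"
        using Rolle[OF st, of f] cont deriv real_differentiable_def by force
      have "f' z = 0" using DERIV_unique[OF deriv z(3)] .
      then have zZ: "z \<in> Z' \<inter> {..<t}" using z Z'_def by simp
      have sub: "insert z (Z' \<inter> {..<s}) \<subseteq> Z' \<inter> {..<t}" using zZ st by auto
      have "z \<notin> Z' \<inter> {..<s}" using z by simp
      then have "card (Z' \<inter> {..<s}) + 1 = card (insert z (Z' \<inter> {..<s}))"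
        using fin Z'_def by simp
      also have "\<dots> \<le> card (Z' \<inter> {..<t})"
        using card_mono[OF _ sub] fin Z'_def by simp
      finally have "card (Z' \<inter> {..<s}) + 1 \<le> card (Z' \<inter> {..<t})" .
      then show ?thesis using IH cT0 Suc.hyps(2) s_def t_def by simp
    qed
  qed
  have bound: "card T \<le> card Z' + 1" if "finite T" "T \<subseteq> Z" for T
  proof (cases "T = {}")
    case True then show ?thesis by simp
  next
    case False
    have "card (Z' \<inter> {..<Max T}) \<le> card Z'"
      using fin Z'_def by (simp add: card_mono)
    then show ?thesis using claim[OF that False] by simp
  qed
  have "finite Z"
  proof (rule ccontr)
    assume "infinite Z"
    then obtain T where "T \<subseteq> Z" "finite T" "card T = card Z' + 2"
      using infinite_arbitrarily_large by blast
    then show False using bound by fastforce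
  qed
  then show ?thesis using bound[of Z] Z_def Z'_def by simp
qed

definition SC :: "(nat \<Rightarrow> real) \<Rightarrow> nat \<Rightarrow> nat set" where
  "SC c n = {k. Suc k < n \<and> c k * c (Suc k) < 0}"

lemma finite_SC: "finite (SC c n)"
  unfolding SC_def by (rule finite_subset[of _ "{..<n}"]) auto

lemma exp_descartes:
  fixes c a :: "nat \<Rightarrow> real"
  assumes "n > 0" "\<And>j. j < n \<Longrightarrow> c j \<noteq> 0" "\<And>j. Suc j < n \<Longrightarrow> a j < a (Suc j)"
  shows "finite {x. (\<Sum>j<n. c j * exp (a j * x)) = 0} \<and>
         card {x. (\<Sum>j<n. c j * exp (a j * x)) = 0} \<le> card (SC c n)"
  using assms
proof (induction "card (SC c n)" arbitrary: c a)
  case 0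
  then have e: "SC c n = {}" using finite_SC by simp
  have pos: "c k * c (Suc k) > 0" if "Suc k < n" for k
  proof -
    have "\<not> c k * c (Suc k) < 0" using e that unfolding SC_def by blast
    moreover have "c k \<noteq> 0" "c (Suc k) \<noteq> 0" using 0(3) that by auto
    ultimately show ?thesis by (simp add: linorder_not_less order_le_less)
  qed
  have c0: "c 0 \<noteq> 0" using 0 by auto
  have all: "c 0 * c j > 0" if "j < n" for j
    using that
  proof (induction j)
    case 0
    then show ?case using c0 by (metis not_real_square_gt_zero)
  next
    case (Suc j)
    have a: "c 0 * c j > 0" using Suc by simp
    have b: "c j * c (Suc j) > 0" using pos Suc.prems by simp
    have "(c 0 * c j) * (c j * c (Suc j)) > 0" using a b by simp
    then have "(c j * c j) * (c 0 * c (Suc j)) > 0" by (simp add: algebra_simps)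
    then show ?case by (simp add: zero_less_mult_iff)
  qed
  have "(\<Sum>j<n. c j * exp (a j * x)) \<noteq> 0" for x
  proof -
    have "c 0 * (\<Sum>j<n. c j * exp (a j * x)) = (\<Sum>j<n. (c 0 * c j) * exp (a j * x))"
      by (simp add: sum_distrib_left algebra_simps)
    also have "\<dots> > 0"
      using all 0 by (intro sum_pos) auto
    finally show ?thesis by auto
  qed
  then show ?case by simp
next
  case (Suc m c a)
  note step = Suc.prems(3)
  have mono: "a i < a j" if "i < j" "j < n" for i j
    using that
  proof (induction j)
    case 0 then show ?case by simp
  next
    case (Suc j)
    have "a j < a (Suc j)" using step Suc.prems by simp
    then show ?case using Suc.IH Suc.prems
      by (metis Suc_lessD less_Suc_eq less_trans)
  qed
  obtain k where k: "k \<in> SC c n"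
    using Suc.hyps(2) by (metis card.empty ex_in_conv nat.simps(3))
  have kn: "Suc k < n" and ck: "c k * c (Suc k) < 0" using k unfolding SC_def by auto
  define \<mu> where "\<mu> = (a k + a (Suc k)) / 2"
  have amk: "a k < \<mu>" "\<mu> < a (Suc k)" using Suc.prems(3)[OF kn] \<mu>_def by auto
  have below: "a j < \<mu>" if "j \<le> k" for j
    using mono[of j k] that amk kn by (cases "j = k") auto
  have above: "a j > \<mu>" if "j \<ge> Suc k" "j < n" for j
    using mono[of "Suc k" j] that amk by (cases "j = Suc k") auto
  define c' where "c' j = c j * (a j - \<mu>)" for j
  define a' where "a' j = a j - \<mu>" for j
  have ane: "a j \<noteq> \<mu>" if "j < n" for j
    using below above that by (metis not_less_eq_eq order_less_irrefl)
  have c'nz: "c' j \<noteq> 0" if "j < n" for j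
    using ane[OF that] Suc.prems(2)[OF that] c'_def by simp
  have SCeq: "SC c' n = SC c n - {k}"
  proof -
    have "c' j * c' (Suc j) < 0 \<longleftrightarrow> (c j * c (Suc j) < 0 \<and> j \<noteq> k)" if "Suc j < n" for j
    proof -
      have eq: "c' j * c' (Suc j) = (c j * c (Suc j)) * ((a j - \<mu>) * (a (Suc j) - \<mu>))"
        by (simp add: c'_def algebra_simps)
      show ?thesis
      proof (cases "j = k")
        case True
        have "(a j - \<mu>) * (a (Suc j) - \<mu>) < 0" using amk True by (simp add: mult_neg_pos)
        then have "c' j * c' (Suc j) > 0" using eq ck True by (simp add: mult_neg_neg)
        then show ?thesis using True by simp
      next
        case False
        have "(a j - \<mu>) * (a (Suc j) - \<mu>) > 0"
        proof (cases "j < k")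
          case True
          then show ?thesis using below[of j] below[of "Suc j"] by (simp add: mult_neg_neg)
        next
          case False
          then have "j \<ge> Suc k" using \<open>j \<noteq> k\<close> by simp
          then show ?thesis using above[of j] above[of "Suc j"] that by simp
        qed
        then show ?thesis using mult_less_cancel_right_pos[of _ "c j * c (Suc j)" 0] eq False by simp
      qed
    qed
    then show ?thesis unfolding SC_def by auto
  qed
  have cm: "m = card (SC c' n)" using SCeq k finite_SC Suc.hyps(2) by simp
  have IH: "finite {x. (\<Sum>j<n. c' j * exp (a' j * x)) = 0} \<and>
         card {x. (\<Sum>j<n. c' j * exp (a' j * x)) = 0} \<le> card (SC c' n)"
    using Suc.hyps(1)[OF cm] Suc.prems(1) c'nz Suc.prems(3) a'_def by auto
  define g where "g x = (\<Sum>j<n. c j * exp (a' j * x))" for x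
  have gd: "(g has_real_derivative (\<Sum>j<n. c' j * exp (a' j * x))) (at x)" for x
    unfolding g_def c'_def a'_def
    by (auto intro!: derivative_eq_intros sum.cong simp: algebra_simps)
  have R: "finite {x. g x = 0} \<and> card {x. g x = 0} \<le> card {x. (\<Sum>j<n. c' j * exp (a' j * x)) = 0} + 1"
    using rolle_count[OF gd] IH by blast
  have geq: "g x = exp (- \<mu> * x) * (\<Sum>j<n. c j * exp (a j * x))" for x
    unfolding g_def a'_def sum_distrib_left
    by (rule sum.cong) (auto simp: algebra_simps exp_add[symmetric])
  have "{x. g x = 0} = {x. (\<Sum>j<n. c j * exp (a j * x)) = 0}" using geq by auto
  then show ?case using R IH cm Suc.hyps(2) by auto
qed



definition vs :: "(real^3) list" where
 "vs = [vector [-1,-1,-1], vector [-1,-1,1], vector [-1,1,-1], vector [-1,1,1],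
        vector [1,-1,-1], vector [1,-1,1], vector [1,1,-1], vector [1,1,1],
        vector [0, -1/golden, -golden], vector [0, -1/golden, golden],
        vector [0, 1/golden, -golden], vector [0, 1/golden, golden],
        vector [-1/golden, -golden, 0], vector [-1/golden, golden, 0],
        vector [1/golden, -golden, 0], vector [1/golden, golden, 0],
        vector [-golden, 0, -1/golden], vector [golden, 0, -1/golden],
        vector [-golden, 0, 1/golden], vector [golden, 0, 1/golden]]"

lemma compr2: "{f s t | s t. s \<in> A \<and> t \<in> B} = (\<lambda>(s,t). f s t) ` (A \<times> B)"
  by auto
lemma compr3: "{f a b c | a b c. a \<in> A \<and> b \<in> B \<and> c \<in> C} = (\<lambda>(a,b,c). f a b c) ` (A \<times> B \<times> C)"
  by (auto simp: image_iff) (metis mem_Sigma_iff case_prod_conv)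

lemma vector3_eq: "(vector [a,b,c] :: real^3) = vector [a',b',c'] \<longleftrightarrow> a = a' \<and> b = b' \<and> c = c'"
  by (auto simp: vec_eq_iff forall_3)

lemma vs_set: "std_dodecahedron_vertices = set vs"
  unfolding std_dodecahedron_vertices_def vs_def compr2 compr3 by auto

lemma vector3_eq0: "(vector [a,b,c] :: real^3) = vector [a',b',c'] \<longleftrightarrow> a = a' \<and> b = b' \<and> c = c'"
  by (auto simp: vec_eq_iff forall_3)

lemma golden_gt1: "golden > 1" unfolding golden_def
  using real_sqrt_gt_1_iff[of 5] by simp

lemma vs_distinct: "distinct vs"
proof -
  have g: "golden > 1" by (rule golden_gt1)
  have h: "1/golden < 1" "1/golden > 0" using g by auto
  have n: "golden \<noteq> 1" "golden \<noteq> -1" "golden \<noteq> 0" "1/golden \<noteq> 1" "1/golden \<noteq> -1" "1/golden \<noteq> 0"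
     "1/golden \<noteq> golden" "1/golden \<noteq> -golden" "-(1/golden) \<noteq> golden"
    using g h by linarith+
  show ?thesis unfolding vs_def using n by (simp add: vector3_eq)
qed

lemma dist_vector3: "dist (vector [a,b,c] :: real^3) (vector [a',b',c']) = sqrt ((a-a')^2 + (b-b')^2 + (c-c')^2)"
  by (simp add: dist_norm norm_vec_def L2_set_def sum_3)

lemma inv_golden: "1/golden = (sqrt 5 - 1)/2"
proof -
  have s: "sqrt 5 * sqrt 5 = (5::real)" by simp
  have pos: "1 + sqrt 5 > (0::real)" by (simp add: add_pos_nonneg)
  show ?thesis unfolding golden_def using s pos by (simp add: field_simps algebra_simps)
qed

lemma golden_alt: "golden = (1 + sqrt 5)/2" by (simp add: golden_def)

definition xs :: "real list" where
 "xs = [6 - sqrt 3 - sqrt 3 * sqrt 5, 3 - sqrt 5, 6 - 2* sqrt 5, 2, 6 - 2* sqrt 3,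
        6 + sqrt 3 - sqrt 3* sqrt 5, 4, 3 + sqrt 5, 6, 9 - sqrt 5, 8, 6 - sqrt 3 + sqrt 3* sqrt 5,
        6 + 2* sqrt 3, 10, 6 + 2* sqrt 5, 9 + sqrt 5, 6 + sqrt 3 + sqrt 3* sqrt 5]"

definition P :: "real^3" where "P = vector [golden, 1/golden, 0]"
definition Q :: "real^3" where "Q = vector [sqrt 3, 0, 0]"

lemma s5sq: "sqrt 5 * sqrt 5 = (5::real)" by simp
lemma s3sq: "sqrt 3 * sqrt 3 = (3::real)" by simp

lemma distP: "map (dist P) vs = map (\<lambda>i. sqrt (xs ! i)) [14,14,10,10,6,6,2,2,9,9,7,7,13,8,8,3,15,1,15,1]"
  unfolding P_def vs_def xs_def
  apply (simp add: dist_vector3 inv_golden del: divide_const_simps)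
  apply (simp add: golden_alt power2_eq_square algebra_simps)
  apply (simp add: field_simps)
  done

lemma distQ: "map (dist Q) vs = map (\<lambda>i. sqrt (xs ! i)) [12,12,12,12,4,4,4,4,8,8,8,8,11,11,5,5,16,0,16,0]"
  unfolding Q_def vs_def xs_def
  apply (simp add: dist_vector3 inv_golden del: divide_const_simps)
  apply (simp add: golden_alt power2_eq_square algebra_simps)
  apply (simp add: field_simps)
  done

lemma sqrt_bounds:
  "2.236 < sqrt (5::real)" "sqrt (5::real) < 2.237"
  "1.732 < sqrt (3::real)" "sqrt (3::real) < 1.733"
  "3.872 < sqrt 3 * sqrt (5::real)" "sqrt 3 * sqrt (5::real) < 3.873"
  apply (rule real_less_rsqrt, simp add: power2_eq_square)
  apply (rule real_less_lsqrt, simp, simp add: power2_eq_square)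
  apply (rule real_less_rsqrt, simp add: power2_eq_square)
  apply (rule real_less_lsqrt, simp, simp add: power2_eq_square)
  apply (unfold real_sqrt_mult[symmetric])
  apply (rule real_less_rsqrt, simp add: power2_eq_square)
  apply (rule real_less_lsqrt, simp, simp add: power2_eq_square)
  done

lemma xs_len: "length xs = 17" by (simp add: xs_def)

lemma xs_sorted: "Suc j < 17 \<Longrightarrow> xs ! j < xs ! Suc j"
proof -
  assume "Suc j < 17"
  then have "j < 16" by simp
  then have "j = 0 \<or> j = 1 \<or> j = 2 \<or> j = 3 \<or> j = 4 \<or> j = 5 \<or> j = 6 \<or> j = 7 \<or> j = 8 \<or>
     j = 9 \<or> j = 10 \<or> j = 11 \<or> j = 12 \<or> j = 13 \<or> j = 14 \<or> j = 15" by arith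
  then show ?thesis using sqrt_bounds by (auto simp: xs_def)
qed

lemma xs_pos: "j < 17 \<Longrightarrow> xs ! j > 0"
proof -
  assume "j < 17"
  then have "j = 0 \<or> j = 1 \<or> j = 2 \<or> j = 3 \<or> j = 4 \<or> j = 5 \<or> j = 6 \<or> j = 7 \<or> j = 8 \<or>
     j = 9 \<or> j = 10 \<or> j = 11 \<or> j = 12 \<or> j = 13 \<or> j = 14 \<or> j = 15 \<or> j = 16" by arith
  then show ?thesis using sqrt_bounds by (auto simp: xs_def)
qed

definition cc :: "real list" where
  "cc = [-2,2,2,1,-4,-2,2,2,-2,2,2,-2,-4,1,2,2,-2]"

lemma comb_identity:
  fixes T :: "nat \<Rightarrow> real"
  shows "sum_list (map T [14,14,10,10,6,6,2,2,9,9,7,7,13,8,8,3,15,1,15,1])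
       - sum_list (map T [12,12,12,12,4,4,4,4,8,8,8,8,11,11,5,5,16,0,16,0])
       = (\<Sum>j<17. cc ! j * T j)"
  by (simp add: cc_def numeral_eq_Suc lessThan_Suc algebra_simps)

lemma cc_nz: "j < 17 \<Longrightarrow> cc ! j \<noteq> 0"
proof -
  assume "j < 17"
  then have "j = 0 \<or> j = 1 \<or> j = 2 \<or> j = 3 \<or> j = 4 \<or> j = 5 \<or> j = 6 \<or> j = 7 \<or> j = 8 \<or>
     j = 9 \<or> j = 10 \<or> j = 11 \<or> j = 12 \<or> j = 13 \<or> j = 14 \<or> j = 15 \<or> j = 16" by arith
  then show ?thesis by (auto simp: cc_def)
qed

lemma SC_cc: "card (SC (\<lambda>j. cc ! j) 17) \<le> 8"
proof -
  have "SC (\<lambda>j. cc ! j) 17 \<subseteq> {0,3,5,7,8,10,12,15}"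
  proof
    fix j assume "j \<in> SC (\<lambda>j. cc ! j) 17"
    then have j: "j < 16" "cc ! j * cc ! Suc j < 0" unfolding SC_def by auto
    then have "j = 0 \<or> j = 1 \<or> j = 2 \<or> j = 3 \<or> j = 4 \<or> j = 5 \<or> j = 6 \<or> j = 7 \<or> j = 8 \<or>
     j = 9 \<or> j = 10 \<or> j = 11 \<or> j = 12 \<or> j = 13 \<or> j = 14 \<or> j = 15" by arith
    then show "j \<in> {0,3,5,7,8,10,12,15}" using j(2) by (auto simp: cc_def)
  qed
  then have "card (SC (\<lambda>j. cc ! j) 17) \<le> card {0::nat,3,5,7,8,10,12,15}"
    by (rule card_mono[rotated]) simp
  then show ?thesis by simp
qed

lemma norm_vector3: "norm (vector [a,b,c] :: real^3) = sqrt (a^2 + b^2 + c^2)"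
  by (simp add: norm_vec_def L2_set_def sum_3)

lemma norm_P: "norm P = sqrt 3"
proof -
  have s: "sqrt 5 * sqrt 5 = (5::real)" by simp
  have "golden^2 + (1/golden)^2 = ((1 + sqrt 5)/2)^2 + ((sqrt 5 - 1)/2)^2"
    by (simp only: inv_golden) (simp only: golden_alt)
  also have "\<dots> = 3" unfolding power2_eq_square using s by (simp add: field_simps algebra_simps)
  finally have "golden^2 + (1/golden)^2 = 3" .
  then show ?thesis unfolding P_def norm_vector3 by simp
qed

lemma norm_Q: "norm Q = sqrt 3"
  unfolding Q_def norm_vector3 by simp

lemma inner_vector3: "inner u (vector [a,b,c] :: real^3) = u$1 * a + u$2 * b + u$3 * c"
  by (simp add: inner_vec_def sum_3)

lemma list_pos:
  assumes "set is \<subseteq> {..<17}"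
  shows "0 \<notin> set (map (\<lambda>i. sqrt (xs ! i)) is)"
  using assms xs_pos by fastforce

lemma P_notin: "P \<notin> set vs"
proof
  assume "P \<in> set vs"
  then have "dist P P \<in> set (map (dist P) vs)" by simp
  then have "0 \<in> set (map (\<lambda>i. sqrt (xs ! i)) [14,14,10,10,6,6,2,2,9,9,7,7,13,8,8,3,15,1,15,1])"
    unfolding distP by simp
  moreover have "set [14,14,10,10,6,6,2,2,9,9,7,7,13,8,8,3,15,1,15,1::nat] \<subseteq> {..<17}" by simp
  ultimately show False using list_pos by blast
qed

lemma Q_notin: "Q \<notin> set vs"
proof
  assume "Q \<in> set vs"
  then have "dist Q Q \<in> set (map (dist Q) vs)" by simp
  then have "0 \<in> set (map (\<lambda>i. sqrt (xs ! i)) [12,12,12,12,4,4,4,4,8,8,8,8,11,11,5,5,16,0,16,0])"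
    unfolding distQ by simp
  moreover have "set [12,12,12,12,4,4,4,4,8,8,8,8,11,11,5,5,16,0,16,0::nat] \<subseteq> {..<17}" by simp
  ultimately show False using list_pos by blast
qed

lemma key_identity:
  "sum_list (map (\<lambda>v. dist P v powr l) vs) - sum_list (map (\<lambda>v. dist Q v powr l) vs)
   = (\<Sum>j<17. cc ! j * exp (ln (sqrt (xs ! j)) * l))"
proof -
  have e: "sum_list (map (\<lambda>v. dist M v powr l) vs) = sum_list (map (\<lambda>d. d powr l) (map (dist M) vs))" for M
    by (simp add: comp_def)
  have x: "exp (ln (sqrt (xs ! j)) * l) = sqrt (xs ! j) powr l" if "j < 17" for j
    using xs_pos[OF that] by (simp add: powr_def mult.commute)
  have "(\<Sum>j<17. cc ! j * exp (ln (sqrt (xs ! j)) * l)) = (\<Sum>j<17. cc ! j * (sqrt (xs ! j) powr l))"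
    by (rule sum.cong) (auto simp: x)
  also have "\<dots> = sum_list (map (\<lambda>v. dist P v powr l) vs) - sum_list (map (\<lambda>v. dist Q v powr l) vs)"
    unfolding e distP distQ map_map comp_def
    using comb_identity[of "\<lambda>i. sqrt (xs ! i) powr l"] by simp
  finally show ?thesis by simp
qed

lemma zeros_bound:
  "finite {l. (\<Sum>j<17. cc ! j * exp (ln (sqrt (xs ! j)) * l)) = 0}
   \<and> card {l. (\<Sum>j<17. cc ! j * exp (ln (sqrt (xs ! j)) * l)) = 0} \<le> 8"
proof -
  have inc: "ln (sqrt (xs ! j)) < ln (sqrt (xs ! Suc j))" if "Suc j < 17" for j
    using xs_sorted[OF that] xs_pos[of j] that by simp
  have "finite {l. (\<Sum>j<17. cc ! j * exp (ln (sqrt (xs ! j)) * l)) = 0}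
   \<and> card {l. (\<Sum>j<17. cc ! j * exp (ln (sqrt (xs ! j)) * l)) = 0} \<le> card (SC (\<lambda>j. cc ! j) 17)"
    by (rule exp_descartes) (auto simp: cc_nz inc)
  then show ?thesis using SC_cc by linarith
qed

lemma vneg: "- (vector [a,b,c] :: real^3) = vector [-a,-b,-c]"
  by (simp add: vec_eq_iff forall_3)

theorem proposition4p1:
  fixes V :: "(real^3) set" and c :: "real^3" and R :: real
  assumes "regular_dodecahedron_vertices V"
    and "V \<subseteq> sphere c R"
  shows "finite {l. \<exists>C. \<forall>M \<in> sphere c R - V. (\<Sum>A\<in>V. dist M A powr (l::real)) = C}
       \<and> card {l. \<exists>C. \<forall>M \<in> sphere c R - V. (\<Sum>A\<in>V. dist M A powr (l::real)) = C} \<le> 8"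
proof -
  obtain c' r f where r: "r > 0" and f: "orthogonal_transformation f"
    and V: "V = (\<lambda>v. c' + r *\<^sub>R f v) ` std_dodecahedron_vertices"
    using assms(1) unfolding regular_dodecahedron_vertices_def by blast
  define G where "G v = c' + r *\<^sub>R f v" for v
  have lin: "linear f" using f by (rule orthogonal_transformation_linear)
  have VG: "V = G ` set vs" using V vs_set G_def by simp
  have Ginj: "inj G"
  proof (rule injI)
    fix x y assume "G x = G y"
    then have "f x = f y" using r by (simp add: G_def)
    then show "x = y" using orthogonal_transformation_inj[OF f] by (simp add: inj_def)
  qed
  have distG: "dist (G w) (G v) = r * dist w v" for w v
  proof -
    have "G w - G v = r *\<^sub>R f (w - v)" by (simp add: G_def linear_diff[OF lin] scaleR_diff_right)
    then show ?thesis using r by (simp add: dist_norm orthogonal_transformation_norm[OF f])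
  qed
  have onS: "dist c (G v) = R" if "v \<in> set vs" for v
    using assms(2) VG that by (auto simp: subset_iff)
  define d where "d = c' - c"
  have orthd: "inner d (f v) = 0" if "v \<in> set vs" "- v \<in> set vs" for v
  proof -
    have Gm: "G (- v) = c' - r *\<^sub>R f v" by (simp add: G_def linear_neg[OF lin])
    have "norm (d + r *\<^sub>R f v) = norm (d - r *\<^sub>R f v)"
      using onS[OF that(1)] onS[OF that(2)] Gm unfolding d_def G_def
      by (simp add: dist_norm norm_minus_commute algebra_simps)
    then have "(norm (d + r *\<^sub>R f v))^2 = (norm (d - r *\<^sub>R f v))^2" by simp
    then have "4 * r * inner d (f v) = 0"
      by (simp add: power2_norm_eq_inner inner_add_left inner_add_right inner_diff_left inner_diff_right inner_commute algebra_simps)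
    then show ?thesis using r by simp
  qed
  obtain u where u: "d = f u" using orthogonal_transformation_surj[OF f] by (metis surj_def)
  have fi: "inner (f u) (f v) = inner u v" for v using f unfolding orthogonal_transformation_def by blast
  have i1: "inner u (vector [1,1,1]) = 0" and i2: "inner u (vector [1,1,-1]) = 0"
    and i3: "inner u (vector [1,-1,1]) = 0" and i4: "inner u (vector [-1,1,1]) = 0"
    using orthd[of "vector [1,1,1]"] orthd[of "vector [1,1,-1]"] orthd[of "vector [1,-1,1]"]
      orthd[of "vector [-1,1,1]"] fi u
    by (simp_all add: vs_def vneg)
  have "u = 0"
    using i1 i2 i3 i4 unfolding inner_vector3 by (simp add: vec_eq_iff forall_3)
  then have "d = 0" using u linear_0[OF lin] by simp
  then have cc': "c' = c" unfolding d_def by simp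
  have distc: "dist c (G w) = r * norm w" for w
    using r by (simp add: G_def cc' dist_norm orthogonal_transformation_norm[OF f])
  have "dist c (G (vector [1,1,1])) = R" using onS by (simp add: vs_def)
  then have Rr: "R = r * sqrt 3" using distc[of "vector [1,1,1]"] by (simp add: norm_vector3)
  have sumG: "(\<Sum>A\<in>V. dist (G w) A powr l) = r powr l * sum_list (map (\<lambda>v. dist w v powr l) vs)" for w l
  proof -
    have "(\<Sum>A\<in>V. dist (G w) A powr l) = (\<Sum>v\<in>set vs. dist (G w) (G v) powr l)"
      unfolding VG by (rule sum.reindex[OF inj_on_subset[OF Ginj], simplified])
    also have "\<dots> = (\<Sum>v\<in>set vs. r powr l * dist w v powr l)"
      using r by (simp add: distG powr_mult)
    also have "\<dots> = r powr l * (\<Sum>v\<in>set vs. dist w v powr l)" by (simp add: sum_distrib_left)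
    also have "\<dots> = r powr l * sum_list (map (\<lambda>v. dist w v powr l) vs)"
      using vs_distinct by (simp add: sum.distinct_set_conv_list)
    finally show ?thesis .
  qed
  have inM: "G w \<in> sphere c R - V" if "norm w = sqrt 3" "w \<notin> set vs" for w
  proof -
    have "G w \<in> sphere c R" using distc that Rr by simp
    moreover have "G w \<notin> V" using that(2) Ginj VG by (auto simp: inj_eq)
    ultimately show ?thesis by simp
  qed
  have PM: "G P \<in> sphere c R - V" using inM norm_P P_notin by simp
  have QM: "G Q \<in> sphere c R - V" using inM norm_Q Q_notin by simp
  let ?L = "{l. \<exists>C. \<forall>M \<in> sphere c R - V. (\<Sum>A\<in>V. dist M A powr (l::real)) = C}"
  let ?Z = "{l. (\<Sum>j<17. cc ! j * exp (ln (sqrt (xs ! j)) * l)) = 0}"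
  have sub: "?L \<subseteq> ?Z"
  proof
    fix l assume "l \<in> ?L"
    then obtain C where C: "\<forall>M \<in> sphere c R - V. (\<Sum>A\<in>V. dist M A powr l) = C" by blast
    have "r powr l * sum_list (map (\<lambda>v. dist P v powr l) vs) = r powr l * sum_list (map (\<lambda>v. dist Q v powr l) vs)"
      using C PM QM sumG by metis
    then have "sum_list (map (\<lambda>v. dist P v powr l) vs) = sum_list (map (\<lambda>v. dist Q v powr l) vs)"
      using r by simp
    then show "l \<in> ?Z" using key_identity[of l] by simp
  qed
  have "finite ?L" using zeros_bound finite_subset[OF sub] by blast
  moreover have "card ?L \<le> 8" using zeros_bound card_mono[OF _ sub] by fastforce
  ultimately show ?thesis by simp
qed

end
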